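(* Let $D$ be a strongly oriented graph, with $n(D)$ vertices and $m(D)$ arcs. Then $\overrightarrow{hn}_{g}(D)\leq m(D)-n(D)+2$.
   Context: An oriented graph is a digraph obtained from a finite simple graph by orienting each edge in exactly one direction (so there are no loops and never both arcs $(u,v)$ and $(v,u)$). It is strongly oriented if for every ordered pair $u,v$ of distinct vertices there is a directed path from $u$ to $v$. The geodetic interval function $I_g$ on an oriented graph $D$ assigns to a pair $(u,v)$ the set of vertices lying on some shortest directed $(u,v)$-path or on some shortest directed $(v,u)$-path (this set contains $u$ and $v$). For $S\subseteq V(D)$, $I_g(S)=\bigcup_{u,v\in S}I_g(u,v)$; a set $C$ is convex if $I_g(C)=C$; the convex hull of $S$ is the smallest convex set containing $S$ (equivalently, the union of the iterates $I_g^k(S)$). A hull set is a set whose convex hull is $V(D)$, and $\overrightarrow{hn}_{g}(D)$ (the geodetic hull number) is the minimum size of a hull set of $D$. *)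

theory Defs
  imports Main
begin

definition oriented_graph :: "'a set \<Rightarrow> ('a \<times> 'a) set \<Rightarrow> bool" where
  "oriented_graph V A \<longleftrightarrow> finite V \<and> A \<subseteq> V \<times> V
     \<and> (\<forall>u. (u, u) \<notin> A) \<and> (\<forall>u v. (u, v) \<in> A \<longrightarrow> (v, u) \<notin> A)"

definition dpath :: "('a \<times> 'a) set \<Rightarrow> 'a list \<Rightarrow> bool" where
  "dpath A p \<longleftrightarrow> p \<noteq> [] \<and> distinct p \<and> (\<forall>i. Suc i < length p \<longrightarrow> (p ! i, p ! Suc i) \<in> A)"

definition dpath_from_to :: "('a \<times> 'a) set \<Rightarrow> 'a \<Rightarrow> 'a \<Rightarrow> 'a list \<Rightarrow> bool" where
  "dpath_from_to A u v p \<longleftrightarrow> dpath A p \<and> hd p = u \<and> last p = v"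

definition strongly_oriented :: "'a set \<Rightarrow> ('a \<times> 'a) set \<Rightarrow> bool" where
  "strongly_oriented V A \<longleftrightarrow> oriented_graph V A
     \<and> (\<forall>u\<in>V. \<forall>v\<in>V. u \<noteq> v \<longrightarrow> (\<exists>p. dpath_from_to A u v p))"

definition shortest_dpath :: "('a \<times> 'a) set \<Rightarrow> 'a \<Rightarrow> 'a \<Rightarrow> 'a list \<Rightarrow> bool" where
  "shortest_dpath A u v p \<longleftrightarrow> dpath_from_to A u v p
     \<and> (\<forall>q. dpath_from_to A u v q \<longrightarrow> length p \<le> length q)"

definition geo_interval :: "('a \<times> 'a) set \<Rightarrow> 'a \<Rightarrow> 'a \<Rightarrow> 'a set" where
  "geo_interval A u v = {w. \<exists>p. (shortest_dpath A u v p \<or> shortest_dpath A v u p) \<and> w \<in> set p}"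

definition geo_interval_set :: "('a \<times> 'a) set \<Rightarrow> 'a set \<Rightarrow> 'a set" where
  "geo_interval_set A S = (\<Union>u\<in>S. \<Union>v\<in>S. geo_interval A u v)"

definition geo_convex :: "('a \<times> 'a) set \<Rightarrow> 'a set \<Rightarrow> bool" where
  "geo_convex A C \<longleftrightarrow> geo_interval_set A C = C"

definition geo_hull :: "'a set \<Rightarrow> ('a \<times> 'a) set \<Rightarrow> 'a set \<Rightarrow> 'a set" where
  "geo_hull V A S = \<Inter>{C. S \<subseteq> C \<and> C \<subseteq> V \<and> geo_convex A C}"

definition geo_hull_set :: "'a set \<Rightarrow> ('a \<times> 'a) set \<Rightarrow> 'a set \<Rightarrow> bool" where
  "geo_hull_set V A S \<longleftrightarrow> S \<subseteq> V \<and> geo_hull V A S = V"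

definition geo_hull_number :: "'a set \<Rightarrow> ('a \<times> 'a) set \<Rightarrow> nat" where
  "geo_hull_number V A = (LEAST k. \<exists>S. geo_hull_set V A S \<and> card S = k)"

end

theory Submission
  imports Defs
begin

lemma interval_self: "u \<in> geo_interval A u u"
proof -
  have "shortest_dpath A u u [u]"
    unfolding shortest_dpath_def dpath_from_to_def dpath_def
    by (auto simp: Suc_le_eq)
  then show ?thesis unfolding geo_interval_def by force
qed

lemma dpath_elem_V:
  assumes "oriented_graph V A" "dpath A p" "hd p \<in> V" "w \<in> set p"
  shows "w \<in> V"
proof -
  obtain i where i: "i < length p" "w = p ! i" using assms(4) by (metis in_set_conv_nth)
  show ?thesis
  proof (cases i)
    case 0 then show ?thesis using i assms(2,3) by (simp add: dpath_def hd_conv_nth)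
  next
    case (Suc j)
    then have "(p ! j, p ! Suc j) \<in> A" using assms(2) i unfolding dpath_def by auto
    then show ?thesis using assms(1) i Suc unfolding oriented_graph_def by auto
  qed
qed

lemma interval_subset_V:
  assumes "oriented_graph V A" "u \<in> V" "v \<in> V"
  shows "geo_interval A u v \<subseteq> V"
  using assms dpath_elem_V[OF assms(1)]
  unfolding geo_interval_def shortest_dpath_def dpath_from_to_def by blast

lemma interval_set_sup: "S \<subseteq> geo_interval_set A S"
  unfolding geo_interval_set_def using interval_self by fast

lemma convex_V: "oriented_graph V A \<Longrightarrow> geo_convex A V"
  unfolding geo_convex_def
  using interval_set_sup[of V A] interval_subset_V[of V A]
  unfolding geo_interval_set_def by blast

lemma convex_Inter:
  assumes "\<And>C. C \<in> F \<Longrightarrow> geo_convex A C"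
  shows "geo_convex A (\<Inter>F)"
proof -
  have "geo_interval A u v \<subseteq> \<Inter>F" if uv: "u \<in> \<Inter>F" "v \<in> \<Inter>F" for u v
  proof (rule Inter_greatest)
    fix C assume C: "C \<in> F"
    then have eq: "geo_interval_set A C = C" using assms unfolding geo_convex_def by simp
    have "u \<in> C" "v \<in> C" using uv C by auto
    then have "geo_interval A u v \<subseteq> geo_interval_set A C" unfolding geo_interval_set_def by auto
    then show "geo_interval A u v \<subseteq> C" using eq by simp
  qed
  then have "geo_interval_set A (\<Inter>F) \<subseteq> \<Inter>F" unfolding geo_interval_set_def
    by (intro UN_least) simp
  then show ?thesis using interval_set_sup[of "\<Inter>F" A] unfolding geo_convex_def by (rule subset_antisym)
qed

lemma hull_convex: "geo_convex A (geo_hull V A S)"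
  unfolding geo_hull_def by (rule convex_Inter) auto

lemma hull_sup: "S \<subseteq> geo_hull V A S"
  unfolding geo_hull_def by auto

lemma hull_sub_V: "oriented_graph V A \<Longrightarrow> S \<subseteq> V \<Longrightarrow> geo_hull V A S \<subseteq> V"
  unfolding geo_hull_def using convex_V by blast

lemma hull_mono: "S \<subseteq> T \<Longrightarrow> geo_hull V A S \<subseteq> geo_hull V A T"
  unfolding geo_hull_def by blast

lemma shortest_exists:
  assumes "dpath_from_to A u v q"
  shows "\<exists>p. shortest_dpath A u v p"
proof -
  obtain p where "dpath_from_to A u v p" "\<forall>y. dpath_from_to A u v y \<longrightarrow> length p \<le> length y"
    using ex_has_least_nat[of "dpath_from_to A u v" q length] assms by blast
  then show ?thesis unfolding shortest_dpath_def by blast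
qed

lemma convex_path:
  assumes "geo_convex A H" "u \<in> H" "v \<in> H" "shortest_dpath A u v p"
  shows "set p \<subseteq> H"
proof -
  have "set p \<subseteq> geo_interval A u v" using assms(4) unfolding geo_interval_def by blast
  also have "\<dots> \<subseteq> geo_interval_set A H" using assms(2,3) unfolding geo_interval_set_def by blast
  finally show ?thesis using assms(1) unfolding geo_convex_def by simp
qed

lemma exit_lemma:
  "p \<noteq> [] \<Longrightarrow> P (hd p) \<Longrightarrow> \<not> P (last p) \<Longrightarrow> \<exists>i. Suc i < length p \<and> P (p ! i) \<and> \<not> P (p ! Suc i)"
proof (induction p)
  case Nil then show ?case by simp
next
  case (Cons a p)
  show ?case
  proof (cases p)
    case Nil then show ?thesis using Cons by simp
  next
    case (Cons b q)
    show ?thesis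
    proof (cases "P b")
      case True
      then have "\<exists>i. Suc i < length p \<and> P (p ! i) \<and> \<not> P (p ! Suc i)"
        using Cons.IH Cons.prems Cons by simp
      then obtain i where "Suc i < length p" "P (p ! i)" "\<not> P (p ! Suc i)" by blast
      then show ?thesis by (intro exI[of _ "Suc i"]) auto
    next
      case False
      then show ?thesis using Cons.prems Cons by (intro exI[of _ 0]) auto
    qed
  qed
qed

lemma succ_exists:
  assumes "strongly_oriented V A" "geo_convex A H" "H \<subseteq> V" "x \<in> H" "y \<in> H" "x \<noteq> y"
  shows "\<exists>z \<in> H. (x, z) \<in> A"
proof -
  have xy: "x \<in> V" "y \<in> V" using assms(3,4,5) by auto
  have "\<exists>q. dpath_from_to A x y q" using assms(1) xy assms(6) unfolding strongly_oriented_def by simp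
  then obtain q where q: "dpath_from_to A x y q" by (elim exE)
  obtain p where p: "shortest_dpath A x y p" using shortest_exists[OF q] by (elim exE)
  have sp: "set p \<subseteq> H" using convex_path[OF assms(2,4,5) p] .
  have dp: "dpath A p" "hd p = x" "last p = y" using p unfolding shortest_dpath_def dpath_from_to_def by auto
  have ne: "p \<noteq> []" using dp(1) unfolding dpath_def by simp
  have "length p \<noteq> 1"
  proof
    assume "length p = 1"
    then obtain a where "p = [a]" by (metis One_nat_def length_0_conv length_Suc_conv)
    then show False using dp assms(6) by simp
  qed
  then have l: "Suc 0 < length p" using ne by (cases p) auto
  then have "(p ! 0, p ! 1) \<in> A" using dp(1) unfolding dpath_def by simp
  moreover have "p ! 0 = x" using dp(2) ne by (simp add: hd_conv_nth)
  moreover have "p ! 1 \<in> H" using sp l by (metis One_nat_def nth_mem subsetD)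
  ultimately show ?thesis by auto
qed

definition arcs_in where "arcs_in A H = card (A \<inter> H \<times> H)"

lemma count_step:
  assumes "strongly_oriented V A" "geo_convex A H'" "H' \<subseteq> V" "H \<subseteq> H'"
    "h \<in> H" "w \<in> H'" "w \<notin> H" "(h, w) \<in> A"
  shows "arcs_in A H' \<ge> arcs_in A H + 1 + card (H' - H)"
proof -
  have fin: "finite V" "A \<subseteq> V \<times> V" using assms(1) unfolding strongly_oriented_def oriented_graph_def by auto
  have "\<forall>x \<in> H' - H. \<exists>z \<in> H'. (x, z) \<in> A"
  proof
    fix x assume x: "x \<in> H' - H"
    then have "x \<noteq> h" using assms(5) by auto
    then show "\<exists>z \<in> H'. (x, z) \<in> A" using succ_exists[OF assms(1,2,3), of x h] x assms(4,5) by blast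
  qed
  then obtain s where s: "\<And>x. x \<in> H' - H \<Longrightarrow> s x \<in> H' \<and> (x, s x) \<in> A" by metis
  define X where "X = ((A \<inter> H \<times> H) \<union> {(h, w)}) \<union> (\<lambda>x. (x, s x)) ` (H' - H)"
  have finH': "finite H'" using fin assms(3) finite_subset by blast
  have finB: "finite (A \<inter> H' \<times> H')" using finH' by auto
  have XB: "X \<subseteq> A \<inter> H' \<times> H'" unfolding X_def using s assms by auto
  have finH: "finite H" using finH' assms(4) finite_subset by blast
  have c1: "card ((A \<inter> H \<times> H) \<union> {(h, w)}) = card (A \<inter> H \<times> H) + 1"
    using assms(7) finH by (subst card_Un_disjoint) auto
  have c2: "card ((\<lambda>x. (x, s x)) ` (H' - H)) = card (H' - H)"
    by (rule card_image) (auto simp: inj_on_def)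
  have "card X = card (A \<inter> H \<times> H) + 1 + card (H' - H)"
    unfolding X_def using finH finH' assms(5) c1 c2 by (subst card_Un_disjoint) auto
  moreover have "card X \<le> card (A \<inter> H' \<times> H')" using card_mono[OF finB XB] .
  ultimately show ?thesis unfolding arcs_in_def by simp
qed

lemma main:
  assumes so: "strongly_oriented V A" and "S \<subseteq> V" "finite S" "S \<noteq> {}"
    "int (card S) \<le> int (arcs_in A (geo_hull V A S)) - int (card (geo_hull V A S)) + 2"
  shows "\<exists>S'. geo_hull_set V A S' \<and> int (card S') \<le> int (card A) - int (card V) + 2"
  using assms(2-)
proof (induction "card (V - geo_hull V A S)" arbitrary: S rule: less_induct)
  case less
  note pr = less.prems
  have og: "oriented_graph V A" using so strongly_oriented_def by blast
  have fin: "finite V" "A \<subseteq> V \<times> V" using og unfolding oriented_graph_def by auto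
  let ?H = "geo_hull V A S"
  have HV: "?H \<subseteq> V" using hull_sub_V[OF og pr(1)] .
  show ?case
  proof (cases "?H = V")
    case True
    have "A \<inter> V \<times> V = A" using fin by blast
    then show ?thesis using True less.prems unfolding geo_hull_set_def arcs_in_def by (intro exI[of _ S]) auto
  next
    case False
    obtain h0 where h0: "h0 \<in> S" using pr(3) ex_in_conv by blast
    then have h0H: "h0 \<in> ?H" using hull_sup[of S V A] by (rule subsetD[rotated])
    obtain v where v: "v \<in> V" "v \<notin> ?H" using False HV by (metis subset_antisym subsetI)
    then have "h0 \<noteq> v" using h0H by blast
    have "h0 \<in> V" using h0H HV by (rule subsetD[rotated])
    then have "\<exists>p. dpath_from_to A h0 v p" using so v(1) \<open>h0 \<noteq> v\<close> unfolding strongly_oriented_def by simp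
    then obtain p where p: "dpath_from_to A h0 v p" by (elim exE)
    then obtain i where i: "Suc i < length p" "p ! i \<in> ?H" "p ! Suc i \<notin> ?H"
      using exit_lemma[of p "\<lambda>x. x \<in> ?H"] h0H v unfolding dpath_from_to_def dpath_def by auto
    define h w where "h = p ! i" and "w = p ! Suc i"
    have hw: "(h, w) \<in> A" using i p unfolding h_def w_def dpath_from_to_def dpath_def by auto
    then have wV: "w \<in> V" using fin(2) by (meson SigmaD2 subsetD)
    define S' where "S' = insert w S"
    let ?H' = "geo_hull V A S'"
    have wS: "w \<notin> S" using i(3) hull_sup[of S V A] unfolding w_def by (meson subsetD)
    have HH': "?H \<subseteq> ?H'" unfolding S'_def by (rule hull_mono) auto
    have wH': "w \<in> ?H'" using hull_sup[of "insert w S" V A] unfolding S'_def by simp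
    have S'V: "S' \<subseteq> V" using wV pr(1) unfolding S'_def by simp
    have H'V: "?H' \<subseteq> V" using hull_sub_V[OF og S'V] .
    have cnt: "arcs_in A ?H' \<ge> arcs_in A ?H + 1 + card (?H' - ?H)"
      using count_step[OF so hull_convex H'V HH', of h w] i(2,3) hw wH' unfolding h_def w_def by blast
    have finH': "finite ?H'" using finite_subset[OF H'V fin(1)] .
    have cardH': "card ?H' = card ?H + card (?H' - ?H)"
      using HH' finH' by (metis card_Diff_subset finite_subset card_mono le_add_diff_inverse)
    have cS': "card S' = card S + 1" using wS pr(2) unfolding S'_def by simp
    have inv: "int (card S') \<le> int (arcs_in A ?H') - int (card ?H') + 2"
      using cnt cardH' cS' pr(4) by linarith
    have lt: "card (V - ?H') < card (V - ?H)"
      using HH' wH' i fin(1) v(1) wV unfolding w_def by (intro psubset_card_mono) auto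
    have "finite S'" "S' \<noteq> {}" using pr(2) unfolding S'_def by auto
    then show ?thesis using less.hyps[OF lt S'V] inv by blast
  qed
qed

theorem proposition3:
  fixes V :: "'a set" and A :: "('a \<times> 'a) set"
  assumes "strongly_oriented V A"
  shows "int (geo_hull_number V A) \<le> int (card A) - int (card V) + 2"
proof -
  have og: "oriented_graph V A" using assms strongly_oriented_def by blast
  have "\<exists>S. geo_hull_set V A S \<and> int (card S) \<le> int (card A) - int (card V) + 2"
  proof (cases "V = {}")
    case True
    have "geo_convex A {}" unfolding geo_convex_def geo_interval_set_def by simp
    then have "geo_hull V A {} = V" using True unfolding geo_hull_def by auto
    then show ?thesis using True unfolding geo_hull_set_def by (intro exI[of _ "{}"]) auto
  next
    case False
    then obtain v0 where v0: "v0 \<in> V" by blast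
    have iv: "geo_interval A v0 v0 \<subseteq> {v0}"
    proof
      fix x assume "x \<in> geo_interval A v0 v0"
      then obtain p where p: "shortest_dpath A v0 v0 p" "x \<in> set p" unfolding geo_interval_def by blast
      have sh: "shortest_dpath A v0 v0 [v0]"
        unfolding shortest_dpath_def dpath_from_to_def dpath_def by (auto simp: Suc_le_eq)
      have "length p \<le> 1" using p sh unfolding shortest_dpath_def by force
      then have "p = [v0]" using p unfolding shortest_dpath_def dpath_from_to_def dpath_def
        by (cases p) auto
      then show "x \<in> {v0}" using p by simp
    qed
    have "geo_convex A {v0}" unfolding geo_convex_def geo_interval_set_def
      using iv interval_self[of v0 A] by auto
    then have H: "geo_hull V A {v0} = {v0}" using v0 unfolding geo_hull_def by auto
    have "A \<inter> {v0} \<times> {v0} = {}" using og unfolding oriented_graph_def by auto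
    then show ?thesis using main[OF assms, of "{v0}"] v0 H unfolding arcs_in_def by auto
  qed
  then obtain S where S: "geo_hull_set V A S" "int (card S) \<le> int (card A) - int (card V) + 2" by blast
  have "geo_hull_number V A \<le> card S" unfolding geo_hull_number_def
    using S(1) by (intro Least_le) blast
  then show ?thesis using S(2) by linarith
qed

end
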